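(* Let $H$ be the real vector space of Hermitian matrices on a finite-dimensional system with inner product $\langle A,B\rangle=\mathrm{Tr}(AB)$. Let $\mathcal{K}\subset H$ be a proper convex cone (closed, convex, pointed, with nonempty interior) and $\mathcal{F}\subset H$ a compact set such that $\{\lambda Z:0\le\lambda\le1,\ Z\in\mathcal{F}\}$ is convex and $\mathcal{F}\cap\mathrm{int}(\mathcal{K})\neq\emptyset$. Define $R^{\mathcal{F}}_{\mathcal{K}}(\mathcal{E}):=\inf\{\lambda\in\mathbb{R}_+:\ (\mathcal{E}+\lambda\mathcal{E}')/(1+\lambda)\in\mathcal{F},\ \mathcal{E}'\in\mathcal{K}\}$ for $\mathcal{E}\in H$, and $\mathcal{N}:=\{\mathcal{E}\in H:\ \delta Z-\mathcal{E}\notin\mathcal{K}\ \ \forall\delta<1,\ Z\in\mathcal{F}\}$. If $\mathcal{E}\in\mathcal{N}$, then $$1+R^{\mathcal{F}}_{\mathcal{K}}(\mathcal{E})=\max\{\langle\varphi,\mathcal{E}\rangle:\ \varphi\in\mathcal{K}^*,\ \langle\varphi,Z\rangle\le1\ \ \forall Z\in\mathcal{F}\}.$$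
   Context: $\mathcal{K}^*:=\{\varphi\in H:\langle\varphi,x\rangle\ge0\ \forall x\in\mathcal{K}\}$ is the dual cone; $\mathrm{int}$ denotes interior; $\mathbb{R}_+$ the nonnegative reals. *)

theory Defs
  imports "HOL-Analysis.Analysis"
begin

definition herm :: "(complex^'n^'n) set" where
  "herm = {A. \<forall>i j. A$i$j = cnj (A$j$i)}"

text \<open>Hilbert-Schmidt inner product  <A,B> = Tr(AB)  (real on Hermitian matrices).\<close>
definition hs_inner :: "complex^'n^'n \<Rightarrow> complex^'n^'n \<Rightarrow> real" where
  "hs_inner A B = Re (trace (A ** B))"

definition herm_interior :: "(complex^'n^'n) set \<Rightarrow> (complex^'n^'n) set" where
  "herm_interior K = {x. \<exists>T. openin (top_of_set herm) T \<and> x \<in> T \<and> T \<subseteq> K}"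

definition proper_cone :: "(complex^'n^'n) set \<Rightarrow> bool" where
  "proper_cone K \<longleftrightarrow> K \<subseteq> herm \<and> cone K \<and> convex K \<and> closed K
      \<and> K \<inter> uminus ` K = {0} \<and> herm_interior K \<noteq> {}"

definition dual_cone :: "(complex^'n^'n) set \<Rightarrow> (complex^'n^'n) set" where
  "dual_cone K = {\<phi> \<in> herm. \<forall>x\<in>K. hs_inner \<phi> x \<ge> 0}"

definition robustness :: "(complex^'n^'n) set \<Rightarrow> (complex^'n^'n) set \<Rightarrow> complex^'n^'n \<Rightarrow> real" where
  "robustness F K E = Inf {l::real. l \<ge> 0 \<and> (\<exists>E'\<in>K. inverse (1 + l) *\<^sub>R (E + l *\<^sub>R E') \<in> F)}"

definition Nset :: "(complex^'n^'n) set \<Rightarrow> (complex^'n^'n) set \<Rightarrow> (complex^'n^'n) set" where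
  "Nset F K = {E \<in> herm. \<forall>\<delta>::real. \<forall>Z\<in>F. \<delta> < 1 \<longrightarrow> \<delta> *\<^sub>R Z - E \<notin> K}"

end

theory Submission
  imports Defs
begin
definition aherm :: "(complex^'n^'n) set" where
  "aherm = {A. \<forall>i j. A$i$j = - cnj (A$j$i)}"

lemma hermD: "x \<in> herm \<Longrightarrow> x$i$j = cnj (x$j$i)"
  unfolding herm_def by blast
lemma ahermD: "x \<in> aherm \<Longrightarrow> x$i$j = - cnj (x$j$i)"
  unfolding aherm_def by blast
lemma hermI: "(\<And>i j. x$i$j = cnj (x$j$i)) \<Longrightarrow> x \<in> herm"
  unfolding herm_def by blast
lemma ahermI: "(\<And>i j. x$i$j = - cnj (x$j$i)) \<Longrightarrow> x \<in> aherm"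
  unfolding aherm_def by blast

lemma hs_inner_herm:
  assumes "x \<in> herm" shows "hs_inner a x = inner a x"
proof -
  have "hs_inner a x = (\<Sum>i\<in>UNIV. \<Sum>j\<in>UNIV. Re (a$i$j * x$j$i))"
    by (simp add: hs_inner_def trace_def matrix_matrix_mult_def)
  also have "\<dots> = (\<Sum>i\<in>UNIV. \<Sum>j\<in>UNIV. inner (a$i$j) (x$i$j))"
  proof (intro sum.cong refl)
    fix i j
    have "x$j$i = cnj (x$i$j)" using hermD[OF assms] .
    then show "Re (a$i$j * x$j$i) = inner (a$i$j) (x$i$j)"
      by (simp add: inner_complex_def)
  qed
  also have "\<dots> = inner a x" by (simp add: inner_vec_def)
  finally show ?thesis .
qed

lemma herm_0[simp]: "0 \<in> herm" by (rule hermI) simp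
lemma herm_add: assumes "x \<in> herm" "y \<in> herm" shows "x + y \<in> herm"
proof (rule hermI)
  fix i j show "(x + y)$i$j = cnj ((x + y)$j$i)"
    using hermD[OF assms(1), of i j] hermD[OF assms(2), of i j] by simp
qed
lemma herm_diff: assumes "x \<in> herm" "y \<in> herm" shows "x - y \<in> herm"
proof (rule hermI)
  fix i j show "(x - y)$i$j = cnj ((x - y)$j$i)"
    using hermD[OF assms(1), of i j] hermD[OF assms(2), of i j] by simp
qed
lemma herm_scale: assumes "x \<in> herm" shows "c *\<^sub>R x \<in> herm"
proof (rule hermI)
  fix i j show "(c *\<^sub>R x)$i$j = cnj ((c *\<^sub>R x)$j$i)"
    using hermD[OF assms(1), of i j] by (simp add: complex_cnj_scaleR)
qed
lemma aherm_scale: assumes "x \<in> aherm" shows "c *\<^sub>R x \<in> aherm"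
proof (rule ahermI)
  fix i j show "(c *\<^sub>R x)$i$j = - cnj ((c *\<^sub>R x)$j$i)"
    using ahermD[OF assms(1), of i j] by (simp add: complex_cnj_scaleR)
qed
lemma aherm_add: assumes "x \<in> aherm" "y \<in> aherm" shows "x + y \<in> aherm"
proof (rule ahermI)
  fix i j show "(x + y)$i$j = - cnj ((x + y)$j$i)"
    using ahermD[OF assms(1), of i j] ahermD[OF assms(2), of i j] by simp
qed
lemma aherm_0[simp]: "0 \<in> aherm" by (rule ahermI) simp

lemma herm_aherm:
  assumes "x \<in> herm" "x \<in> aherm" shows "x = 0"
proof -
  have "x$i$j = 0" for i j
  proof -
    have "x$i$j = cnj (x$j$i)" by (rule hermD[OF assms(1)])
    moreover have "x$i$j = - cnj (x$j$i)" by (rule ahermD[OF assms(2)])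
    ultimately show ?thesis by (simp add: complex_eq_iff)
  qed
  then show ?thesis by (simp add: vec_eq_iff)
qed

lemma herm_orth_aherm:
  assumes "h \<in> herm" "b \<in> aherm" shows "inner h b = 0"
proof -
  define f where "f i j = inner (h$i$j) (b$i$j)" for i j
  have fs: "f j i = - f i j" for i j
  proof -
    have "h$j$i = cnj (h$i$j)" by (rule hermD[OF assms(1)])
    moreover have "b$j$i = - cnj (b$i$j)" by (rule ahermD[OF assms(2)])
    ultimately show ?thesis by (simp add: f_def inner_complex_def)
  qed
  have e1: "inner h b = (\<Sum>i\<in>UNIV. \<Sum>j\<in>UNIV. f i j)" by (simp add: inner_vec_def f_def)
  have "(\<Sum>i\<in>UNIV. \<Sum>j\<in>UNIV. f i j) = (\<Sum>j\<in>UNIV. \<Sum>i\<in>UNIV. f i j)" by (rule sum.swap)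
  also have "\<dots> = (\<Sum>j\<in>UNIV. \<Sum>i\<in>UNIV. - f j i)" by (intro sum.cong refl) (rule fs)
  also have "\<dots> = - (\<Sum>j\<in>UNIV. \<Sum>i\<in>UNIV. f j i)" by (simp add: sum_negf)
  finally have e2: "(\<Sum>i\<in>UNIV. \<Sum>j\<in>UNIV. f i j) = - (\<Sum>i\<in>UNIV. \<Sum>j\<in>UNIV. f i j)" .
  show ?thesis using e1 e2 by linarith
qed

lemma orth_aherm_imp_herm:
  fixes a :: "complex^'n^'n"
  assumes "\<forall>b\<in>aherm. inner a b = 0" shows "a \<in> herm"
proof -
  define aT :: "complex^'n^'n" where "aT = (\<chi> i j. cnj (a$j$i))"
  define b where "b = a - aT"
  define h where "h = (1/2) *\<^sub>R (a + aT)"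
  have b: "b \<in> aherm" by (rule ahermI) (simp add: b_def aT_def)
  have h: "h \<in> herm" by (rule hermI) (simp add: h_def aT_def)
  have ah: "a = h + (1/2) *\<^sub>R b" by (simp add: h_def b_def vec_eq_iff algebra_simps)
  have "0 = inner a b" using assms b by simp
  also have "\<dots> = (1/2) * inner b b" using herm_orth_aherm[OF h b] by (simp add: ah inner_add_left)
  finally have "b = 0" by simp
  then have "a = aT" by (simp add: b_def)
  show ?thesis
  proof (rule hermI)
    fix i j
    have "a$i$j = aT$i$j" using \<open>a = aT\<close> by simp
    then show "a$i$j = cnj (a$j$i)" by (simp add: aT_def)
  qed
qed

theorem lemma3:
  fixes K F :: "(complex^'n^'n) set" and E :: "complex^'n^'n"
  assumes "proper_cone K"
    and "F \<subseteq> herm" and "compact F"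
    and "convex {t *\<^sub>R Z | t Z. 0 \<le> t \<and> t \<le> 1 \<and> Z \<in> F}"
    and "F \<inter> herm_interior K \<noteq> {}"
    and "E \<in> Nset F K"
  shows "(\<exists>\<phi>\<in>dual_cone K. (\<forall>Z\<in>F. hs_inner \<phi> Z \<le> 1) \<and> hs_inner \<phi> E = 1 + robustness F K E)
       \<and> (\<forall>\<phi>\<in>dual_cone K. (\<forall>Z\<in>F. hs_inner \<phi> Z \<le> 1) \<longrightarrow> hs_inner \<phi> E \<le> 1 + robustness F K E)"
proof -
  have KH: "K \<subseteq> herm" and cK: "cone K" and vK: "convex K" and pt: "K \<inter> uminus ` K = {0}"
    using assms(1) unfolding proper_cone_def by blast+
  have FH: "F \<subseteq> herm" using assms(2) .
  have K0: "0 \<in> K" using pt by (metis IntD1 singletonI)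
  have Ksc: "c *\<^sub>R x \<in> K" if "x \<in> K" "0 \<le> c" for c x
    using cK that unfolding cone_def by blast
  have Kadd: "x + y \<in> K" if "x \<in> K" "y \<in> K" for x y
  proof -
    have "(1/2) *\<^sub>R x + (1/2) *\<^sub>R y \<in> K" using convexD[OF vK that] by simp
    from Ksc[OF this, of 2] show ?thesis by (simp add: scaleR_right_distrib)
  qed
  have EH: "E \<in> herm" and EN: "\<And>\<delta> Z. Z \<in> F \<Longrightarrow> \<delta> < 1 \<Longrightarrow> \<delta> *\<^sub>R Z - E \<notin> K"
    using assms(6) by (auto simp: Nset_def)
  obtain Z0 where Z0F: "Z0 \<in> F" and Z0i: "Z0 \<in> herm_interior K" using assms(5) by blast
  obtain T where T: "openin (top_of_set herm) T" "Z0 \<in> T" "T \<subseteq> K"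
    using Z0i by (auto simp: herm_interior_def)
  obtain \<epsilon> where epos: "0 < \<epsilon>" and eb: "ball Z0 \<epsilon> \<inter> herm \<subseteq> T"
    using T(1,2) unfolding openin_contains_ball by blast
  have ball: "y \<in> K" if "y \<in> herm" "dist Z0 y < \<epsilon>" for y
    using eb T(3) that by auto
  have Z0H: "Z0 \<in> herm" using Z0F FH by auto
  have Z0K: "Z0 \<in> K" using ball[OF Z0H] epos by simp
  obtain B where B: "\<And>x. x \<in> F \<Longrightarrow> norm x \<le> B"
    using compact_imp_bounded[OF assms(3)] unfolding bounded_iff by blast
  have B0: "0 \<le> B" using B[OF Z0F] norm_ge_zero[of Z0] by linarith
  define C where "C = {t *\<^sub>R Z | t Z. 0 \<le> t \<and> t \<le> 1 \<and> Z \<in> F}"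
  have convC: "convex C" using assms(4) by (simp add: C_def)
  have FC: "Z \<in> C" if "Z \<in> F" for Z
  proof -
    have "Z = 1 *\<^sub>R Z \<and> 0 \<le> (1::real) \<and> (1::real) \<le> 1 \<and> Z \<in> F" using that by simp
    then show ?thesis unfolding C_def by blast
  qed
  have CH: "c \<in> herm" if "c \<in> C" for c
    using that FH herm_scale unfolding C_def by blast
  have C0: "0 \<in> C"
  proof -
    have "0 = 0 *\<^sub>R Z0 \<and> 0 \<le> (0::real) \<and> (0::real) \<le> 1 \<and> Z0 \<in> F" using Z0F by simp
    then show ?thesis unfolding C_def by blast
  qed
  define S where "S = {l::real. l \<ge> 0 \<and> (\<exists>E'\<in>K. inverse (1 + l) *\<^sub>R (E + l *\<^sub>R E') \<in> F)}"
  define R where "R = robustness F K E"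
  have RS: "R = Inf S" by (simp add: R_def S_def robustness_def)
  have bdd: "bdd_below S" unfolding S_def by (auto intro!: bdd_belowI[of _ 0])
  have feas: "\<sigma> - 1 \<in> S" if Z: "Z \<in> F" and s1: "1 < \<sigma>" and sK: "\<sigma> *\<^sub>R Z - E \<in> K" for \<sigma> Z
  proof -
    define E' where "E' = inverse (\<sigma> - 1) *\<^sub>R (\<sigma> *\<^sub>R Z - E)"
    have E'K: "E' \<in> K" unfolding E'_def using Ksc[OF sK] s1 by simp
    have "E + (\<sigma> - 1) *\<^sub>R E' = \<sigma> *\<^sub>R Z" using s1 by (simp add: E'_def)
    then have "inverse (1 + (\<sigma> - 1)) *\<^sub>R (E + (\<sigma> - 1) *\<^sub>R E') = Z" using s1 by simp
    then show ?thesis unfolding S_def using E'K Z s1 by auto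
  qed
  have Sne: "S \<noteq> {}"
  proof -
    define \<sigma> where "\<sigma> = norm E / \<epsilon> + 2"
    have "0 \<le> norm E / \<epsilon>" using epos by simp
    then have s1: "1 < \<sigma>" by (simp add: \<sigma>_def)
    have lt: "norm E / \<sigma> < \<epsilon>"
    proof -
      have "norm E < \<sigma> * \<epsilon>" using epos by (simp add: \<sigma>_def algebra_simps)
      then show ?thesis using s1 by (simp add: divide_less_eq mult.commute)
    qed
    have "Z0 - inverse \<sigma> *\<^sub>R E \<in> K"
      apply (rule ball)
      using Z0H EH herm_diff herm_scale apply blast
      using lt s1 by (simp add: dist_norm divide_inverse mult.commute)
    from Ksc[OF this, of \<sigma>] s1 have "\<sigma> *\<^sub>R Z0 - E \<in> K" by (simp add: scaleR_diff_right)
    from feas[OF Z0F s1 this] show ?thesis by blast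
  qed
  have R0: "0 \<le> R" unfolding RS using Sne by (rule cInf_greatest) (auto simp: S_def)
  have M: "R \<le> \<sigma> - 1" if Z: "Z \<in> F" and K1: "\<sigma> *\<^sub>R Z - E \<in> K" for \<sigma> Z
  proof -
    have s1: "1 \<le> \<sigma>" using EN[OF Z] K1 by force
    have step: "R \<le> \<sigma> / (1 - lam) - 1" if l: "0 < lam" "lam < 1" for lam
    proof -
      have "(1 - lam) *\<^sub>R Z + lam *\<^sub>R Z0 \<in> C"
        using convexD[OF convC FC[OF Z] FC[OF Z0F]] l by simp
      then obtain t' Z' where t': "0 \<le> t'" "t' \<le> 1" "Z' \<in> F"
        and w: "(1 - lam) *\<^sub>R Z + lam *\<^sub>R Z0 = t' *\<^sub>R Z'" by (auto simp: C_def)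
      define \<mu> where "\<mu> = \<sigma> / (1 - lam)"
      have mpos: "0 < \<mu>" using s1 l by (simp add: \<mu>_def)
      have mu1: "\<mu> * (1 - lam) = \<sigma>" using l by (simp add: \<mu>_def)
      have e1: "(\<mu> * t') *\<^sub>R Z' = \<sigma> *\<^sub>R Z + (\<mu> * lam) *\<^sub>R Z0"
      proof -
        have "(\<mu> * t') *\<^sub>R Z' = \<mu> *\<^sub>R ((1 - lam) *\<^sub>R Z + lam *\<^sub>R Z0)" by (simp add: w)
        also have "\<dots> = (\<mu> * (1 - lam)) *\<^sub>R Z + (\<mu> * lam) *\<^sub>R Z0"
          by (simp add: scaleR_right_distrib)
        finally show ?thesis by (simp add: mu1)
      qed
      define c where "c = \<epsilon> / (2 * (B + 1))"
      have cpos: "0 < c" using epos B0 by (simp add: c_def)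
      have "c * norm Z' \<le> c * B" using B[OF t'(3)] cpos by simp
      also have "c * B < \<epsilon>"
      proof -
        have h: "0 \<le> B * \<epsilon>" using B0 epos by simp
        show ?thesis using epos B0 by (simp add: c_def field_simps) (use h in linarith)
      qed
      finally have cZ: "c * norm Z' < \<epsilon>" .
      have ZcK: "Z0 - c *\<^sub>R Z' \<in> K"
        apply (rule ball)
        using Z0H FH t'(3) herm_diff herm_scale apply blast
        using cZ cpos by (simp add: dist_norm)
      have "(\<sigma> *\<^sub>R Z - E) + (\<mu> * lam) *\<^sub>R (Z0 - c *\<^sub>R Z') \<in> K"
        using Kadd[OF K1 Ksc[OF ZcK]] mpos l by simp
      moreover have "(\<sigma> *\<^sub>R Z - E) + (\<mu> * lam) *\<^sub>R (Z0 - c *\<^sub>R Z') = (\<mu> * t' - \<mu> * lam * c) *\<^sub>R Z' - E"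
        using e1 by (simp add: algebra_simps)
      ultimately have "\<not> (\<mu> * t' - \<mu> * lam * c < 1)" using EN[OF t'(3)] by metis
      moreover have "0 < \<mu> * lam * c" using mpos l cpos by simp
      ultimately have mt1: "1 < \<mu> * t'" by linarith
      have "(\<mu> * t') *\<^sub>R Z' - E \<in> K"
        using Kadd[OF K1 Ksc[OF Z0K, of "\<mu> * lam"]] mpos l e1 by (simp add: algebra_simps)
      from feas[OF t'(3) mt1 this] have "\<mu> * t' - 1 \<in> S" .
      then have "R \<le> \<mu> * t' - 1" unfolding RS using bdd by (rule cInf_lower)
      also have "\<dots> \<le> \<mu> - 1" using mpos t' by (simp add: mult_left_le)
      finally show ?thesis by (simp add: \<mu>_def)
    qed
    show ?thesis
    proof (rule ccontr)
      assume "\<not> R \<le> \<sigma> - 1"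
      then have lt: "\<sigma> < 1 + R" by simp
      define lam where "lam = (1 - \<sigma> / (1 + R)) / 2"
      have rp: "0 < 1 + R" using R0 by simp
      have "\<sigma> / (1 + R) < 1" using lt rp by simp
      moreover have "0 < \<sigma> / (1 + R)" using s1 rp by simp
      ultimately have l: "0 < lam" "lam < 1" by (auto simp: lam_def)
      have d: "1 - lam = (1 + R + \<sigma>) / (2 * (1 + R))" using rp by (simp add: lam_def field_simps)
      have "\<sigma> / (1 - lam) = 2 * \<sigma> * (1 + R) / (1 + R + \<sigma>)" unfolding d using rp s1 by (simp add: field_simps)
      also have "\<dots> < 1 + R"
      proof -
        have p: "0 < (1 + R) * (1 + R - \<sigma>)" using lt rp by (intro mult_pos_pos) auto
        have eq: "(1 + R) * (1 + R + \<sigma>) - 2 * \<sigma> * (1 + R) = (1 + R) * (1 + R - \<sigma>)"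
          by (simp add: algebra_simps)
        have den: "0 < 1 + R + \<sigma>" using rp s1 by linarith
        have q: "2 * \<sigma> * (1 + R) < (1 + R) * (1 + R + \<sigma>)" using p eq by linarith
        show ?thesis using q den by (simp add: pos_divide_less_eq mult.commute)
      qed
      finally show False using step[OF l] by simp
    qed
  qed
  have weak: "\<forall>\<phi>\<in>dual_cone K. (\<forall>Z\<in>F. hs_inner \<phi> Z \<le> 1) \<longrightarrow> hs_inner \<phi> E \<le> 1 + R"
  proof (intro ballI impI)
    fix \<phi> assume phiD: "\<phi> \<in> dual_cone K" and phiF: "\<forall>Z\<in>F. hs_inner \<phi> Z \<le> 1"
    have "hs_inner \<phi> E - 1 \<le> l" if "l \<in> S" for l
    proof -
      from that obtain E' where l0: "0 \<le> l" and E'K: "E' \<in> K"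
        and ZF: "inverse (1 + l) *\<^sub>R (E + l *\<^sub>R E') \<in> F" by (auto simp: S_def)
      define Z where "Z = inverse (1 + l) *\<^sub>R (E + l *\<^sub>R E')"
      have "(1 + l) *\<^sub>R Z = E + l *\<^sub>R E'" using l0 by (simp add: Z_def)
      then have Eeq: "E = (1 + l) *\<^sub>R Z - l *\<^sub>R E'" by (simp add: algebra_simps)
      have ZH: "Z \<in> herm" using ZF FH by (auto simp: Z_def)
      have E'H: "E' \<in> herm" using E'K KH by auto
      have "hs_inner \<phi> E = inner \<phi> E" using EH by (rule hs_inner_herm)
      also have "\<dots> = (1 + l) * inner \<phi> Z - l * inner \<phi> E'"
        by (simp add: Eeq inner_diff_right)
      also have "inner \<phi> Z = hs_inner \<phi> Z" using ZH by (simp add: hs_inner_herm)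
      also have "inner \<phi> E' = hs_inner \<phi> E'" using E'H by (simp add: hs_inner_herm)
      finally have eq: "hs_inner \<phi> E = (1 + l) * hs_inner \<phi> Z - l * hs_inner \<phi> E'" .
      have "hs_inner \<phi> Z \<le> 1" using phiF ZF by (simp add: Z_def)
      moreover have "0 \<le> hs_inner \<phi> E'" using phiD E'K by (auto simp: dual_cone_def)
      ultimately have "(1 + l) * hs_inner \<phi> Z \<le> 1 + l" "0 \<le> l * hs_inner \<phi> E'"
        using l0 by (auto intro: mult_left_le)
      then show ?thesis using eq by linarith
    qed
    then have "hs_inner \<phi> E - 1 \<le> Inf S" using Sne by (intro cInf_greatest) auto
    then show "hs_inner \<phi> E \<le> 1 + R" by (simp add: RS)
  qed
  define r where "r = 1 + R"
  have r1: "1 \<le> r" using R0 by (simp add: r_def)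
  define V where "V = {E - (s *\<^sub>R (c - k) + b) | s c k b. 0 \<le> s \<and> s < r \<and> c \<in> C \<and> k \<in> K \<and> b \<in> aherm}"
  have convV: "convex V"
    unfolding convex_def
  proof (intro ballI allI impI)
    fix x y and u v :: real
    assume xV: "x \<in> V" and yV: "y \<in> V" and uv: "0 \<le> u" "0 \<le> v" "u + v = 1"
    from xV obtain s1 c1 k1 b1 where x: "x = E - (s1 *\<^sub>R (c1 - k1) + b1)"
      and h1: "0 \<le> s1" "s1 < r" "c1 \<in> C" "k1 \<in> K" "b1 \<in> aherm" by (auto simp: V_def)
    from yV obtain s2 c2 k2 b2 where y: "y = E - (s2 *\<^sub>R (c2 - k2) + b2)"
      and h2: "0 \<le> s2" "s2 < r" "c2 \<in> C" "k2 \<in> K" "b2 \<in> aherm" by (auto simp: V_def)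
    define \<sigma> where "\<sigma> = u * s1 + v * s2"
    have bb: "u *\<^sub>R b1 + v *\<^sub>R b2 \<in> aherm" using h1 h2 by (simp add: aherm_add aherm_scale)
    have s0: "0 \<le> \<sigma>" using uv h1 h2 by (simp add: \<sigma>_def)
    have "\<sigma> \<le> u * max s1 s2 + v * max s1 s2" unfolding \<sigma>_def
      using uv by (intro add_mono mult_left_mono) auto
    also have "\<dots> = max s1 s2" using uv by (simp add: algebra_simps flip: distrib_right)
    finally have sr: "\<sigma> < r" using h1 h2 by simp
    have xy: "u *\<^sub>R x + v *\<^sub>R y = E - ((u * s1) *\<^sub>R (c1 - k1) + (v * s2) *\<^sub>R (c2 - k2) + (u *\<^sub>R b1 + v *\<^sub>R b2))"
    proof -
      have "u *\<^sub>R x + v *\<^sub>R y = (u + v) *\<^sub>R E - ((u * s1) *\<^sub>R (c1 - k1) + (v * s2) *\<^sub>R (c2 - k2) + (u *\<^sub>R b1 + v *\<^sub>R b2))"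
        by (simp add: x y algebra_simps)
      then show ?thesis using uv by simp
    qed
    show "u *\<^sub>R x + v *\<^sub>R y \<in> V"
    proof (cases "\<sigma> = 0")
      case True
      then have z: "u * s1 = 0" "v * s2 = 0" using uv h1 h2 unfolding \<sigma>_def
        by (simp_all add: add_nonneg_eq_0_iff)
      have "u *\<^sub>R x + v *\<^sub>R y = E - (0 *\<^sub>R (c1 - k1) + (u *\<^sub>R b1 + v *\<^sub>R b2))"
        unfolding xy z by simp
      then show ?thesis unfolding V_def using h1 bb r1 by force
    next
      case False
      then have sp: "0 < \<sigma>" using s0 by simp
      define c where "c = (u * s1 / \<sigma>) *\<^sub>R c1 + (v * s2 / \<sigma>) *\<^sub>R c2"
      define k where "k = (u * s1 / \<sigma>) *\<^sub>R k1 + (v * s2 / \<sigma>) *\<^sub>R k2"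
      have sum1: "u * s1 / \<sigma> + v * s2 / \<sigma> = 1" using sp by (simp add: \<sigma>_def add_divide_distrib[symmetric])
      have nn: "0 \<le> u * s1 / \<sigma>" "0 \<le> v * s2 / \<sigma>" using uv h1 h2 sp by auto
      have cC: "c \<in> C" unfolding c_def by (rule convexD[OF convC h1(3) h2(3) nn sum1])
      have kK: "k \<in> K" unfolding k_def by (rule convexD[OF vK h1(4) h2(4) nn sum1])
      have "\<sigma> *\<^sub>R (c - k) = (u * s1) *\<^sub>R (c1 - k1) + (v * s2) *\<^sub>R (c2 - k2)"
        using sp by (simp add: c_def k_def algebra_simps)
      then have "u *\<^sub>R x + v *\<^sub>R y = E - (\<sigma> *\<^sub>R (c - k) + (u *\<^sub>R b1 + v *\<^sub>R b2))" using xy by simp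
      then show ?thesis unfolding V_def using s0 sr cC kK bb by blast
    qed
  qed
  have notin: "0 \<notin> V"
  proof
    assume "0 \<in> V"
    then obtain s c k b where eq: "0 = E - (s *\<^sub>R (c - k) + b)"
      and h: "0 \<le> s" "s < r" "c \<in> C" "k \<in> K" "b \<in> aherm" by (auto simp: V_def)
    have "b = E - s *\<^sub>R (c - k)" using eq by (simp add: algebra_simps)
    also have "\<dots> \<in> herm" using EH CH[OF h(3)] KH h(4) by (auto intro!: herm_diff herm_scale)
    finally have "b = 0" using herm_aherm h(5) by blast
    obtain t Z where tZ: "0 \<le> t" "t \<le> 1" "Z \<in> F" "c = t *\<^sub>R Z" using h(3) by (auto simp: C_def)
    have "(s * t) *\<^sub>R Z - E = s *\<^sub>R k" using eq \<open>b = 0\<close> tZ(4) by (simp add: algebra_simps)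
    then have "(s * t) *\<^sub>R Z - E \<in> K" using Ksc[OF h(4) h(1)] by simp
    from M[OF tZ(3) this] have "R \<le> s * t - 1" .
    also have "s * t \<le> s" using h(1) tZ by (simp add: mult_left_le)
    finally show False using h(2) by (simp add: r_def)
  qed
  obtain a where a0: "a \<noteq> 0" and aV: "\<forall>x\<in>V. 0 \<le> inner a x"
    using separating_hyperplane_set_0[OF convV notin] by blast
  have key: "inner a (s *\<^sub>R (c - k) + b) \<le> inner a E"
    if "0 \<le> s" "s < r" "c \<in> C" "k \<in> K" "b \<in> aherm" for s c k b
  proof -
    have "E - (s *\<^sub>R (c - k) + b) \<in> V" unfolding V_def using that by blast
    then have "0 \<le> inner a (E - (s *\<^sub>R (c - k) + b))" using aV by blast
    then show ?thesis by (simp add: inner_diff_right)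
  qed
  define \<beta> where "\<beta> = inner a E"
  have "\<forall>b\<in>(aherm :: (complex^'n^'n) set). inner a b = 0"
  proof
    fix b :: "complex^'n^'n" assume b: "b \<in> aherm"
    show "inner a b = 0"
    proof (rule ccontr)
      assume p: "inner a b \<noteq> 0"
      define x where "x = (\<bar>\<beta>\<bar> + 1) / inner a b"
      have "inner a (0 *\<^sub>R (0 - 0) + x *\<^sub>R b) \<le> \<beta>"
        unfolding \<beta>_def using r1 C0 K0 aherm_scale[OF b] by (intro key) auto
      moreover have "inner a (0 *\<^sub>R (0 - 0) + x *\<^sub>R b) = \<bar>\<beta>\<bar> + 1" using p by (simp add: x_def)
      ultimately show False by linarith
    qed
  qed
  then have aH: "a \<in> herm" by (rule orth_aherm_imp_herm)
  have bpos: "0 < \<beta>"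
  proof -
    define d where "d = \<epsilon> / (2 * norm a)"
    have na: "0 < norm a" using a0 by simp
    have dpos: "0 < d" using epos na by (simp add: d_def)
    have kK: "Z0 - d *\<^sub>R a \<in> K"
      apply (rule ball)
      using Z0H aH herm_diff herm_scale apply blast
      using na epos by (simp add: dist_norm d_def)
    have "inner a ((1/2) *\<^sub>R (Z0 - (Z0 - d *\<^sub>R a)) + 0) \<le> \<beta>"
      unfolding \<beta>_def using r1 FC[OF Z0F] kK by (intro key) auto
    moreover have "inner a ((1/2) *\<^sub>R (Z0 - (Z0 - d *\<^sub>R a)) + 0) = (1/2) * d * inner a a" by simp
    moreover have "0 < inner a a" using a0 by simp
    moreover have "0 < 1/2 * d * inner a a" if "0 < inner a a" using dpos that by simp
    ultimately show ?thesis unfolding \<beta>_def by linarith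
  qed
  define \<phi> where "\<phi> = (r / \<beta>) *\<^sub>R a"
  have phiH: "\<phi> \<in> herm" using aH by (simp add: \<phi>_def herm_scale)
  have rp: "0 < r" using r1 by simp
  have phiK: "0 \<le> hs_inner \<phi> k" if kK: "k \<in> K" for k
  proof -
    have kH: "k \<in> herm" using kK KH by auto
    have "0 \<le> inner a k"
    proof (rule ccontr)
      assume "\<not> 0 \<le> inner a k"
      then have q: "inner a k < 0" by simp
      define x where "x = 2 * (\<bar>\<beta>\<bar> + 1) / (- inner a k)"
      have x0: "0 \<le> x" unfolding x_def by (rule divide_nonneg_pos) (use q in auto)
      have "inner a ((1/2) *\<^sub>R (0 - x *\<^sub>R k) + 0) \<le> \<beta>"
        unfolding \<beta>_def using r1 C0 Ksc[OF kK x0] by (intro key) auto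
      moreover have "inner a ((1/2) *\<^sub>R (0 - x *\<^sub>R k) + 0) = \<bar>\<beta>\<bar> + 1"
        using q by (simp add: x_def inner_diff_right)
      ultimately show False by linarith
    qed
    then show ?thesis using hs_inner_herm[OF kH] rp bpos by (simp add: \<phi>_def)
  qed
  have phiF: "hs_inner \<phi> Z \<le> 1" if ZF: "Z \<in> F" for Z
  proof -
    have ZH: "Z \<in> herm" using ZF FH by auto
    have "inner a Z * r \<le> \<beta>"
    proof (rule ccontr)
      assume "\<not> inner a Z * r \<le> \<beta>"
      then have gt: "\<beta> < inner a Z * r" by simp
      define p where "p = inner a Z"
      have pp: "0 < p"
      proof (rule ccontr)
        assume "\<not> 0 < p"
        then have "inner a Z * r \<le> 0" using rp by (simp add: p_def mult_nonpos_nonneg)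
        then show False using gt bpos by linarith
      qed
      define s where "s = (r + \<beta> / p) / 2"
      have bp: "\<beta> / p < r" using gt pp by (simp add: p_def divide_less_eq mult.commute)
      have "0 \<le> \<beta> / p" using bpos pp by simp
      then have s0: "0 \<le> s" "s < r" using bp rp by (auto simp: s_def)
      have "inner a (s *\<^sub>R (Z - 0) + 0) \<le> \<beta>"
        unfolding \<beta>_def using s0 FC[OF ZF] K0 by (intro key) auto
      moreover have "inner a (s *\<^sub>R (Z - 0) + 0) = s * p" by (simp add: p_def)
      moreover have "s * p = (r * p + \<beta>) / 2" using pp by (simp add: s_def field_simps)
      ultimately have "(r * p + \<beta>) / 2 \<le> \<beta>" by simp
      moreover have "\<beta> < r * p" using gt by (simp add: p_def mult.commute)
      ultimately show False by simp
    qed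
    then have "r / \<beta> * inner a Z \<le> 1" using bpos by (simp add: field_simps)
    then show ?thesis using hs_inner_herm[OF ZH] by (simp add: \<phi>_def)
  qed
  have phiE: "hs_inner \<phi> E = 1 + R"
    using hs_inner_herm[OF EH] bpos by (simp add: \<phi>_def \<beta>_def r_def)
  have "\<phi> \<in> dual_cone K" using phiH phiK by (simp add: dual_cone_def)
  then show ?thesis using phiF phiE weak by (auto simp: R_def)
qed

end
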